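(* Let $N\ge 1$ and $q\ge 2$ be integers. Let $\mu_N$ be a probability measure on $(S^1)^N$ which has a smooth density $\rho_N$ with respect to $\alpha^{\otimes N}$, and for $t\in\mathbb{R}$ let $\mu_{N,t}:=R_t\mu_N$ be its image under the joint rotation $R_t$. Then there is an assignment $\mu\mapsto \big(c_{\mu}(\sigma',\sigma'+1_i)\big)_{\sigma'\in\{1,\dots,q\}^N,\, i\in V_N}$ of nonnegative numbers to such measures $\mu$ such that, for every $t\in\mathbb{R}$ and every function $g:\{1,\dots,q\}^N\to\mathbb{R}$, $$\lim_{\varepsilon\downarrow 0}\frac{1}{\varepsilon}\Big(T(\mu_{N,t+\varepsilon})(g)-T(\mu_{N,t})(g)\Big)=T(\mu_{N,t})(Q_{\mu_{N,t}}g),$$ where $T(\mu_{N,t})(g)=\int \mu_N(d\omega)\, g(TR_t\omega)$ and $$Q_{\mu_{N,t}}g(\sigma'):=\sum_{i=1}^N c_{\mu_{N,t}}(\sigma',\sigma'+1_i)\big(g(\sigma'+1_i)-g(\sigma')\big).$$ In particular the rates depend on time only through the measure $\mu_{N,t}$.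
   Context: $S^1$ is identified with $[0,2\pi)$, $\alpha$ denotes Lebesgue measure on $S^1$, $V_N=\{1,\dots,N\}$. For $t\in\mathbb{R}$, $R_t$ rotates a point $s\in S^1$ to $(s+t)\bmod 2\pi$, and acts on $(S^1)^N$ sitewise: $(R_t\omega)_i=R_t\omega_i$. For $k\in\{1,\dots,q\}$ let $S_k=[\tfrac{2\pi}{q}(k-1),\tfrac{2\pi}{q}k)$, and let $T:S^1\to\{1,\dots,q\}$ be $T(s)=k$ iff $s\in S_k$; $T$ acts on configurations sitewise and on measures by image measure. For $\sigma'\in\{1,\dots,q\}^N$, $\sigma'+1_i$ is the configuration with $(\sigma'+1_i)_j=\sigma'_j+\mathbf 1_{i=j}$, where values are taken modulo $q$ in $\{1,\dots,q\}$ (so $q+1$ means $1$). *)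

theory Defs
  imports "HOL-Probability.Probability"
begin

text \<open>Circle S^1 identified with [0, 2 pi); (S^1)^N with index type 'n (V_N = UNIV, N = CARD('n)).\<close>

definition torus :: "(real^'n) set" where
  "torus = {\<omega>. \<forall>i. 0 \<le> \<omega>$i \<and> \<omega>$i < 2*pi}"

definition torus_leb :: "(real^'n) measure" where
  "torus_leb = restrict_space lborel torus"

definition rot_pt :: "real \<Rightarrow> real \<Rightarrow> real" where
  "rot_pt t s = (s + t) - 2*pi * of_int \<lfloor>(s + t) / (2*pi)\<rfloor>"

definition rot :: "real \<Rightarrow> real^'n \<Rightarrow> real^'n" where
  "rot t \<omega> = (\<chi> i. rot_pt t (\<omega>$i))"

definition rot_meas :: "real \<Rightarrow> (real^'n) measure \<Rightarrow> (real^'n) measure" where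
  "rot_meas t \<mu> = distr \<mu> \<mu> (rot t)"

text \<open>T(s) = k iff s in S_k = [2pi(k-1)/q, 2pi k/q).\<close>
definition Tcell :: "nat \<Rightarrow> real \<Rightarrow> nat" where
  "Tcell q s = nat \<lfloor>s * real q / (2*pi)\<rfloor> + 1"

definition Tconf :: "nat \<Rightarrow> real^'n \<Rightarrow> ('n \<Rightarrow> nat)" where
  "Tconf q \<omega> = (\<lambda>i. Tcell q (\<omega>$i))"

text \<open>sigma' + 1_i, values modulo q in {1..q}.\<close>
definition plus1 :: "nat \<Rightarrow> ('n \<Rightarrow> nat) \<Rightarrow> 'n \<Rightarrow> ('n \<Rightarrow> nat)" where
  "plus1 q \<sigma> i = \<sigma>(i := \<sigma> i mod q + 1)"

definition Qgen :: "nat \<Rightarrow> ((real^'n) measure \<Rightarrow> ('n \<Rightarrow> nat) \<Rightarrow> 'n \<Rightarrow> real)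
    \<Rightarrow> (real^'n) measure \<Rightarrow> (('n \<Rightarrow> nat) \<Rightarrow> real) \<Rightarrow> ('n \<Rightarrow> nat) \<Rightarrow> real" where
  "Qgen q c \<mu> g \<sigma> = (\<Sum>i\<in>UNIV. c \<mu> \<sigma> i * (g (plus1 q \<sigma> i) - g \<sigma>))"

definition partial :: "'n \<Rightarrow> (real^'n \<Rightarrow> real) \<Rightarrow> (real^'n \<Rightarrow> real)" where
  "partial i f x = deriv (\<lambda>s. f (x + s *\<^sub>R axis i 1)) 0"

fun has_partials :: "'n list \<Rightarrow> (real^'n \<Rightarrow> real) \<Rightarrow> bool" where
  "has_partials [] f = continuous_on UNIV f"
| "has_partials (i # is) f =
     ((\<forall>x. (\<lambda>s. f (x + s *\<^sub>R axis i 1)) differentiable (at 0)) \<and> has_partials is (partial i f))"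

definition smooth_fun :: "(real^'n \<Rightarrow> real) \<Rightarrow> bool" where
  "smooth_fun f \<longleftrightarrow> (\<forall>is. has_partials is f)"

text \<open>A smooth function on (S^1)^N: a smooth function on R^N, 2 pi-periodic in each coordinate.\<close>
definition smooth_on_torus :: "(real^'n \<Rightarrow> real) \<Rightarrow> bool" where
  "smooth_on_torus f \<longleftrightarrow> smooth_fun f \<and> (\<forall>x i. f (x + (2*pi) *\<^sub>R axis i 1) = f x)"

end

theory Submission
  imports Defs
begin


lemma rot_pt_eq: "\<exists>k::int. rot_pt t s = s + t - 2*pi * of_int k"
  unfolding rot_pt_def by blast

lemma rot_pt_bounds: "0 \<le> rot_pt t s" "rot_pt t s < 2*pi"
proof -
  have p: "2*pi > 0" by simp
  define x where "x = (s+t)/(2*pi)"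
  have st: "s + t = 2*pi*x" using p by (simp add: x_def)
  have a: "of_int \<lfloor>x\<rfloor> \<le> x" "x < of_int \<lfloor>x\<rfloor> + 1" by linarith+
  have "2*pi * of_int \<lfloor>x\<rfloor> \<le> 2*pi*x" using a(1) p by (intro mult_left_mono) simp_all
  moreover have "2*pi*x < 2*pi*(of_int \<lfloor>x\<rfloor> + 1)" using a(2) p by (intro mult_strict_left_mono) simp_all
  ultimately show "0 \<le> rot_pt t s" "rot_pt t s < 2*pi" unfolding rot_pt_def x_def[symmetric] st
    by (simp_all add: algebra_simps)
qed

lemma rot_pt_unique:
  assumes "0 \<le> y" "y < 2*pi" "y = s + t - 2*pi * of_int k"
  shows "rot_pt t s = y"
proof -
  have p: "2*pi > 0" by simp
  have "(s+t)/(2*pi) = of_int k + y/(2*pi)" using assms(3) p by (simp add: field_simps)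
  moreover have "0 \<le> y/(2*pi)" "y/(2*pi) < 1" using assms p by (simp_all add: field_simps)
  ultimately have "\<lfloor>(s+t)/(2*pi)\<rfloor> = k" by (simp add: floor_unique)
  thus ?thesis using assms unfolding rot_pt_def by simp
qed

lemma rot_pt_comp: "rot_pt (t + e) s = rot_pt e (rot_pt t s)"
proof -
  obtain k::int where k: "rot_pt t s = s + t - 2*pi * of_int k" using rot_pt_eq by blast
  obtain l::int where l: "rot_pt e (rot_pt t s) = rot_pt t s + e - 2*pi * of_int l" using rot_pt_eq by blast
  have "rot_pt e (rot_pt t s) = s + (t + e) - 2*pi * of_int (k+l)" using k l by (simp add: algebra_simps)
  thus ?thesis using rot_pt_unique[OF rot_pt_bounds] by metis
qed

lemma rot_pt_period: "rot_pt t (s + 2*pi) = rot_pt t s"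
proof -
  obtain k::int where k: "rot_pt t s = s + t - 2*pi * of_int k" using rot_pt_eq by blast
  have "rot_pt t s = (s + 2*pi) + t - 2*pi * of_int (k+1)" using k by (simp add: algebra_simps)
  thus ?thesis using rot_pt_unique[OF rot_pt_bounds] by metis
qed

lemma rot_pt_in: "0 \<le> s + t \<Longrightarrow> s + t < 2*pi \<Longrightarrow> rot_pt t s = s + t"
  by (rule rot_pt_unique[where k=0]) auto

lemma rot_comp: "rot (t + e) \<omega> = rot e (rot t \<omega>)"
  by (simp add: rot_def rot_pt_comp vec_eq_iff)

lemma rot_in_torus: "rot t \<omega> \<in> torus"
  by (simp add: rot_def torus_def rot_pt_bounds)

lemma Tcell_eq:
  assumes q: "q > 0" and s: "0 \<le> s" and k: "k \<ge> 1"
  shows "Tcell q s = k \<longleftrightarrow> 2*pi*(real k - 1)/q \<le> s \<and> s < 2*pi*real k/q"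
proof -
  have p: "2*pi > 0" by simp
  define y where "y = s * real q / (2*pi)"
  have y0: "0 \<le> y" using s q by (simp add: y_def)
  have "Tcell q s = k \<longleftrightarrow> \<lfloor>y\<rfloor> = int k - 1"
    unfolding Tcell_def y_def[symmetric] using y0 k by auto
  also have "\<dots> \<longleftrightarrow> real k - 1 \<le> y \<and> y < real k"
    by (simp add: floor_eq_iff)
  also have "\<dots> \<longleftrightarrow> 2*pi*(real k - 1)/q \<le> s \<and> s < 2*pi*real k/q"
    unfolding y_def using q p by (simp add: field_simps)
  finally show ?thesis .
qed

lemma Tcell_range:
  assumes q: "q > 0" and s: "0 \<le> s" "s < 2*pi"
  shows "Tcell q s \<in> {1..q}"
proof -
  have p: "2*pi > 0" by simp
  define y where "y = s * real q / (2*pi)"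
  have y0: "0 \<le> y" "y < q" using s q p by (simp_all add: y_def field_simps)
  hence "\<lfloor>y\<rfloor> < int q" by linarith
  moreover have "\<lfloor>y\<rfloor> \<ge> 0" using y0 by simp
  ultimately have "nat \<lfloor>y\<rfloor> < q" by (simp add: nat_less_iff)
  thus ?thesis unfolding Tcell_def y_def[symmetric] by auto
qed

definition Cells :: "nat \<Rightarrow> ('n \<Rightarrow> nat) set" where
  "Cells q = {\<sigma>. \<forall>i. \<sigma> i \<in> {1..q}}"

lemma finite_Cells: "finite (Cells (q::nat) :: ('n::finite \<Rightarrow> nat) set)"
proof -
  have "Cells q = PiE (UNIV::'n set) (\<lambda>_. {1..q})" by (auto simp: Cells_def PiE_def Pi_def extensional_def)
  thus ?thesis by (simp add: finite_PiE)
qed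

lemma Tconf_in_Cells: "q > 0 \<Longrightarrow> Tconf q (rot t \<omega>) \<in> Cells q"
  unfolding Cells_def Tconf_def rot_def using Tcell_range rot_pt_bounds by auto

definition lo :: "nat \<Rightarrow> ('n \<Rightarrow> nat) \<Rightarrow> real^'n" where
  "lo q \<sigma> = (\<chi> j. 2*pi*(real (\<sigma> j) - 1)/q)"
definition hi :: "nat \<Rightarrow> ('n \<Rightarrow> nat) \<Rightarrow> real^'n" where
  "hi q \<sigma> = (\<chi> j. 2*pi*real (\<sigma> j)/q)"

definition hbox :: "real^'n \<Rightarrow> real^'n \<Rightarrow> (real^'n) set" where
  "hbox c d = {x. \<forall>j. c$j \<le> x$j \<and> x$j < d$j}"

lemma torus_hbox: "torus = hbox 0 (vec (2*pi))"
  by (simp add: torus_def hbox_def)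

lemma rot_pt_meas[measurable]: "rot_pt t \<in> borel_measurable borel"
  unfolding rot_pt_def by measurable

lemma vec_nth_meas[measurable]: "(\<lambda>x::real^'n. x$j) \<in> borel_measurable borel"
  by (intro borel_measurable_continuous_onI continuous_intros)

lemma rot_meas_borel[measurable]: "rot t \<in> borel_measurable (borel :: (real^'n) measure)"
proof -
  have "(\<lambda>x. rot t x \<bullet> i) \<in> borel_measurable borel" if "i \<in> Basis" for i :: "real^'n"
  proof -
    from that obtain j :: 'n where j: "i = axis j 1" by (auto simp: Basis_vec_def)
    have "(\<lambda>x::real^'n. rot t x \<bullet> i) = (\<lambda>x::real^'n. rot_pt t (x$j))"
      unfolding j rot_def by (simp add: inner_axis)
    thus ?thesis by simp
  qed
  thus ?thesis by (subst borel_measurable_euclidean_space) auto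
qed

lemma Tconf_set_borel[measurable]:
  assumes q: "q > 0"
  shows "{x::real^'n. Tconf q (rot t x) = \<sigma>} \<in> sets borel"
proof -
  have "{x::real^'n. Tconf q (rot t x) = \<sigma>} = {x. \<forall>j. Tcell q (rot_pt t (x$j)) = \<sigma> j}"
    by (auto simp: Tconf_def rot_def fun_eq_iff)
  also have "\<dots> = {x. \<forall>j. \<sigma> j \<ge> 1 \<and> 2*pi*(real (\<sigma> j) - 1)/q \<le> rot_pt t (x$j) \<and> rot_pt t (x$j) < 2*pi*real (\<sigma> j)/q}"
  proof -
    have "Tcell q (rot_pt t s) = k \<longleftrightarrow> k \<ge> 1 \<and> 2*pi*(real k - 1)/q \<le> rot_pt t s \<and> rot_pt t s < 2*pi*real k/q" for s k
      using Tcell_eq[OF q rot_pt_bounds(1), of k t s] by (auto simp: Tcell_def)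
    thus ?thesis by simp
  qed
  also have "\<dots> \<in> sets borel" by measurable
  finally show ?thesis .
qed


lemma lborel_transl:
  fixes f :: "real^'n \<Rightarrow> ennreal"
  assumes [measurable]: "f \<in> borel_measurable borel"
  shows "(\<integral>\<^sup>+x. f (v + x) \<partial>lborel) = (\<integral>\<^sup>+x. f x \<partial>lborel)"
proof -
  have "(\<integral>\<^sup>+x. f x \<partial>lborel) = (\<integral>\<^sup>+x. f x \<partial>distr lborel borel ((+) v))"
    by (simp add: lborel_distr_plus)
  also have "\<dots> = (\<integral>\<^sup>+x. f (v + x) \<partial>lborel)"
    by (rule nn_integral_distr) auto
  finally show ?thesis by simp
qed

lemma per_nat:
  assumes per: "\<And>x. f (x + (2*pi) *\<^sub>R axis j 1) = f x"
  shows "f (x + (2*pi*real n) *\<^sub>R axis j (1::real)) = f x"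
proof (induction n)
  case 0 thus ?case by simp
next
  case (Suc n)
  have e: "x + (2*pi*real (Suc n)) *\<^sub>R axis j (1::real) = (x + (2*pi*real n) *\<^sub>R axis j 1) + (2*pi) *\<^sub>R axis j 1"
    by (simp add: algebra_simps)
  have "f (x + (2*pi*real (Suc n)) *\<^sub>R axis j (1::real)) = f ((x + (2*pi*real n) *\<^sub>R axis j 1) + (2*pi) *\<^sub>R axis j 1)"
    by (simp only: e)
  also have "\<dots> = f (x + (2*pi*real n) *\<^sub>R axis j 1)" by (rule per)
  also have "\<dots> = f x" by (rule Suc.IH)
  finally show ?case .
qed

lemma per_int:
  assumes per: "\<And>x. f (x + (2*pi) *\<^sub>R axis j 1) = f x"
  shows "f (x + (2*pi * of_int k) *\<^sub>R axis j (1::real)) = f x"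
proof (cases "k \<ge> 0")
  case True
  define n where "n = nat k"
  have "k = int n" using True by (simp add: n_def)
  thus ?thesis using per_nat[of f j, OF per] by simp
next
  case False
  define n where "n = nat (-k)"
  have n: "k = - int n" using False by (simp add: n_def)
  have "f ((x + (2*pi * of_int k) *\<^sub>R axis j 1) + (2*pi*real n) *\<^sub>R axis j 1) = f (x + (2*pi * of_int k) *\<^sub>R axis j 1)"
    by (rule per_nat[of f j, OF per])
  moreover have "(x + (2*pi * of_int k) *\<^sub>R axis j 1) + (2*pi*real n) *\<^sub>R axis j (1::real) = x"
    by (simp add: n algebra_simps)
  ultimately show ?thesis by simp
qed

definition Sj :: "real^'n \<Rightarrow> 'n \<Rightarrow> real \<Rightarrow> real \<Rightarrow> (real^'n) set" where
  "Sj c j \<alpha> \<beta> = {y. \<alpha> \<le> y$j \<and> y$j < \<beta> \<and> (\<forall>i. i \<noteq> j \<longrightarrow> c$i \<le> y$i \<and> y$i < c$i + 2*pi)}"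

lemma Sj_borel[measurable]: "Sj c j \<alpha> \<beta> \<in> sets borel"
  unfolding Sj_def by measurable

lemma hbox_borel[measurable]: "hbox c d \<in> sets borel"
  unfolding hbox_def by measurable

lemma hbox_Sj: "hbox c (c + vec (2*pi)) = Sj c j (c$j) (c$j + 2*pi)"
  unfolding hbox_def Sj_def by auto

lemma L0j:
  fixes h :: "real^'n \<Rightarrow> ennreal"
  assumes [measurable]: "h \<in> borel_measurable borel"
    and per: "\<And>x j. h (x + (2*pi) *\<^sub>R axis j 1) = h x"
  shows "(\<integral>\<^sup>+x. h x * indicator (hbox c (c + vec (2*pi))) x \<partial>lborel)
       = (\<integral>\<^sup>+x. h x * indicator (hbox (\<chi> i. if i = j then 0 else c$i) ((\<chi> i. if i = j then 0 else c$i) + vec (2*pi))) x \<partial>lborel)"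
proof -
  have p: "2*pi > 0" by simp
  define k where "k = \<lfloor>c$j/(2*pi)\<rfloor>"
  define r where "r = c$j - 2*pi * of_int k"
  have kb: "of_int k \<le> c$j/(2*pi)" "c$j/(2*pi) < of_int k + 1" unfolding k_def by linarith+
  have r0: "0 \<le> r" "r < 2*pi"
  proof -
    have "2*pi * of_int k \<le> 2*pi*(c$j/(2*pi))" using kb(1) p by (intro mult_left_mono) auto
    moreover have "2*pi*(c$j/(2*pi)) < 2*pi*(of_int k + 1)" using kb(2) p by (intro mult_strict_left_mono) auto
    ultimately show "0 \<le> r" "r < 2*pi" unfolding r_def using p by (auto simp: algebra_simps)
  qed
  define v where "v = (2*pi * of_int k) *\<^sub>R axis j (1::real)"
  define w where "w = (2*pi) *\<^sub>R axis j (1::real)"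
  have "(\<integral>\<^sup>+x. h x * indicator (hbox c (c + vec (2*pi))) x \<partial>lborel)
      = (\<integral>\<^sup>+x. h (v + x) * indicator (hbox c (c + vec (2*pi))) (v + x) \<partial>lborel)"
    by (rule lborel_transl[symmetric]) measurable
  also have "\<dots> = (\<integral>\<^sup>+x. h x * indicator (Sj c j r (r + 2*pi)) x \<partial>lborel)"
  proof (rule nn_integral_cong)
    fix x :: "real^'n"
    have "h (v + x) = h x" unfolding v_def using per_int[of h j x k] per by (simp add: add.commute)
    moreover have "v + x \<in> hbox c (c + vec (2*pi)) \<longleftrightarrow> x \<in> Sj c j r (r + 2*pi)"
      unfolding hbox_def Sj_def v_def r_def by (auto simp: algebra_simps axis_def)
    ultimately show "h (v + x) * indicator (hbox c (c + vec (2*pi))) (v + x) = h x * indicator (Sj c j r (r + 2*pi)) x"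
      by (simp add: indicator_def)
  qed
  finally have E1: "(\<integral>\<^sup>+x. h x * indicator (hbox c (c + vec (2*pi))) x \<partial>lborel) = (\<integral>\<^sup>+x. h x * indicator (Sj c j r (r + 2*pi)) x \<partial>lborel)" .
  have "(\<integral>\<^sup>+x. h x * indicator (Sj c j r (r + 2*pi)) x \<partial>lborel) = (\<integral>\<^sup>+x. h x * indicator (Sj c j r (2*pi)) x + h x * indicator (Sj c j (2*pi) (r + 2*pi)) x \<partial>lborel)"
    by (rule nn_integral_cong) (use r0 in \<open>auto simp: Sj_def indicator_def\<close>)
  also have "\<dots> = (\<integral>\<^sup>+x. h x * indicator (Sj c j r (2*pi)) x \<partial>lborel) + (\<integral>\<^sup>+x. h x * indicator (Sj c j (2*pi) (r + 2*pi)) x \<partial>lborel)"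
    by (rule nn_integral_add) auto
  finally have E2: "(\<integral>\<^sup>+x. h x * indicator (Sj c j r (r + 2*pi)) x \<partial>lborel) = (\<integral>\<^sup>+x. h x * indicator (Sj c j r (2*pi)) x \<partial>lborel) + (\<integral>\<^sup>+x. h x * indicator (Sj c j (2*pi) (r + 2*pi)) x \<partial>lborel)" .
  have "(\<integral>\<^sup>+x. h x * indicator (Sj c j (2*pi) (r + 2*pi)) x \<partial>lborel)
      = (\<integral>\<^sup>+x. h (w + x) * indicator (Sj c j (2*pi) (r + 2*pi)) (w + x) \<partial>lborel)"
    by (rule lborel_transl[symmetric]) measurable
  also have "\<dots> = (\<integral>\<^sup>+x. h x * indicator (Sj c j 0 r) x \<partial>lborel)"
  proof (rule nn_integral_cong)
    fix x :: "real^'n"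
    have "h (w + x) = h x" unfolding w_def using per[of x j] by (simp add: add.commute)
    moreover have "w + x \<in> Sj c j (2*pi) (r + 2*pi) \<longleftrightarrow> x \<in> Sj c j 0 r"
      unfolding Sj_def w_def by (auto simp: algebra_simps axis_def)
    ultimately show "h (w + x) * indicator (Sj c j (2*pi) (r + 2*pi)) (w + x) = h x * indicator (Sj c j 0 r) x"
      by (simp add: indicator_def)
  qed
  finally have E3: "(\<integral>\<^sup>+x. h x * indicator (Sj c j (2*pi) (r + 2*pi)) x \<partial>lborel) = (\<integral>\<^sup>+x. h x * indicator (Sj c j 0 r) x \<partial>lborel)" .
  have "(\<integral>\<^sup>+x. h x * indicator (Sj c j r (2*pi)) x \<partial>lborel) + (\<integral>\<^sup>+x. h x * indicator (Sj c j 0 r) x \<partial>lborel)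
      = (\<integral>\<^sup>+x. h x * indicator (Sj c j r (2*pi)) x + h x * indicator (Sj c j 0 r) x \<partial>lborel)"
    by (rule nn_integral_add[symmetric]) auto
  also have "\<dots> = (\<integral>\<^sup>+x. h x * indicator (hbox (\<chi> i. if i = j then 0 else c$i) ((\<chi> i. if i = j then 0 else c$i) + vec (2*pi))) x \<partial>lborel)"
  proof (rule nn_integral_cong)
    fix x :: "real^'n"
    have A: "x \<in> hbox (\<chi> i. if i = j then 0 else c$i) ((\<chi> i. if i = j then 0 else c$i) + vec (2*pi))
         \<longleftrightarrow> (\<forall>i. (if i = j then 0 else c$i) \<le> x$i \<and> x$i < (if i = j then 0 else c$i) + 2*pi)"
      by (simp add: hbox_def)
    have B: "(\<forall>i. (if i = j then 0 else c$i) \<le> x$i \<and> x$i < (if i = j then 0 else c$i) + 2*pi)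
         \<longleftrightarrow> 0 \<le> x$j \<and> x$j < 2*pi \<and> (\<forall>i. i \<noteq> j \<longrightarrow> c$i \<le> x$i \<and> x$i < c$i + 2*pi)"
    proof
      assume H: "\<forall>i. (if i = j then 0 else c$i) \<le> x$i \<and> x$i < (if i = j then 0 else c$i) + 2*pi"
      show "0 \<le> x$j \<and> x$j < 2*pi \<and> (\<forall>i. i \<noteq> j \<longrightarrow> c$i \<le> x$i \<and> x$i < c$i + 2*pi)"
      proof (intro conjI allI impI)
        show "0 \<le> x$j" "x$j < 2*pi" using H[rule_format, of j] by simp_all
      next
        fix i assume "i \<noteq> j"
        thus "c$i \<le> x$i" "x$i < c$i + 2*pi" using H[rule_format, of i] by simp_all
      qed
    next
      assume H: "0 \<le> x$j \<and> x$j < 2*pi \<and> (\<forall>i. i \<noteq> j \<longrightarrow> c$i \<le> x$i \<and> x$i < c$i + 2*pi)"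
      show "\<forall>i. (if i = j then 0 else c$i) \<le> x$i \<and> x$i < (if i = j then 0 else c$i) + 2*pi"
      proof
        fix i show "(if i = j then 0 else c$i) \<le> x$i \<and> x$i < (if i = j then 0 else c$i) + 2*pi"
          using H by (cases "i = j") auto
      qed
    qed
    have C: "indicator (Sj c j r (2*pi)) x + indicator (Sj c j 0 r) x
        = (indicator (hbox (\<chi> i. if i = j then 0 else c$i) ((\<chi> i. if i = j then 0 else c$i) + vec (2*pi))) x :: ennreal)"
    proof -
      let ?O = "\<forall>i. i \<noteq> j \<longrightarrow> c$i \<le> x$i \<and> x$i < c$i + 2*pi"
      have P1: "x \<in> Sj c j r (2*pi) \<longleftrightarrow> r \<le> x$j \<and> x$j < 2*pi \<and> ?O" by (simp add: Sj_def)
      have P2: "x \<in> Sj c j 0 r \<longleftrightarrow> 0 \<le> x$j \<and> x$j < r \<and> ?O" by (simp add: Sj_def)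
      have P: "x \<in> hbox (\<chi> i. if i = j then 0 else c$i) ((\<chi> i. if i = j then 0 else c$i) + vec (2*pi))
          \<longleftrightarrow> 0 \<le> x$j \<and> x$j < 2*pi \<and> ?O" using A B by simp
      show ?thesis
      proof (cases "x \<in> Sj c j r (2*pi)")
        case True
        from True P1 have h1: "r \<le> x$j" "x$j < 2*pi" "?O" by blast+
        have "\<not> x$j < r" using h1 by linarith
        hence n2: "x \<notin> Sj c j 0 r" using P2 by blast
        have "0 \<le> x$j" using r0 h1 by linarith
        hence "x \<in> hbox (\<chi> i. if i = j then 0 else c$i) ((\<chi> i. if i = j then 0 else c$i) + vec (2*pi))"
          using P h1 by blast
        thus ?thesis using True n2 by simp
      next
        case False
        have "x \<in> Sj c j 0 r \<longleftrightarrow> x \<in> hbox (\<chi> i. if i = j then 0 else c$i) ((\<chi> i. if i = j then 0 else c$i) + vec (2*pi))"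
        proof
          assume "x \<in> Sj c j 0 r"
          hence "0 \<le> x$j" "x$j < r" "?O" using P2 by blast+
          moreover have "x$j < 2*pi" using calculation r0 by linarith
          ultimately show "x \<in> hbox (\<chi> i. if i = j then 0 else c$i) ((\<chi> i. if i = j then 0 else c$i) + vec (2*pi))"
            using P by blast
        next
          assume "x \<in> hbox (\<chi> i. if i = j then 0 else c$i) ((\<chi> i. if i = j then 0 else c$i) + vec (2*pi))"
          hence h: "0 \<le> x$j" "x$j < 2*pi" "?O" using P by blast+
          have "\<not> r \<le> x$j" using False P1 h by blast
          hence "x$j < r" by linarith
          thus "x \<in> Sj c j 0 r" using P2 h by blast
        qed
        thus ?thesis using False by (simp add: indicator_def)
      qed
    qed
    show "h x * indicator (Sj c j r (2*pi)) x + h x * indicator (Sj c j 0 r) x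
        = h x * indicator (hbox (\<chi> i. if i = j then 0 else c$i) ((\<chi> i. if i = j then 0 else c$i) + vec (2*pi))) x"
      by (simp only: C[symmetric] distrib_left)
  qed
  finally have E4: "(\<integral>\<^sup>+x. h x * indicator (Sj c j r (2*pi)) x \<partial>lborel) + (\<integral>\<^sup>+x. h x * indicator (Sj c j 0 r) x \<partial>lborel) = (\<integral>\<^sup>+x. h x * indicator (hbox (\<chi> i. if i = j then 0 else c$i) ((\<chi> i. if i = j then 0 else c$i) + vec (2*pi))) x \<partial>lborel)" .
  show ?thesis by (simp only: E1 E2 E3 E4)
qed

definition zeroJ :: "'n set \<Rightarrow> real^'n \<Rightarrow> real^'n" where
  "zeroJ J c = (\<chi> i. if i \<in> J then 0 else c$i)"

lemma L0:
  fixes h :: "real^'n \<Rightarrow> ennreal"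
  assumes [measurable]: "h \<in> borel_measurable borel"
    and per: "\<And>x j. h (x + (2*pi) *\<^sub>R axis j 1) = h x"
  shows "(\<integral>\<^sup>+x. h x * indicator (hbox c (c + vec (2*pi))) x \<partial>lborel)
       = (\<integral>\<^sup>+x. h x * indicator torus x \<partial>lborel)"
proof -
  have "(\<integral>\<^sup>+x. h x * indicator (hbox c (c + vec (2*pi))) x \<partial>lborel)
       = (\<integral>\<^sup>+x. h x * indicator (hbox (zeroJ J c) (zeroJ J c + vec (2*pi))) x \<partial>lborel)" for J
  proof (induction J rule: finite_induct[OF finite])
    case 1 thus ?case by (simp add: zeroJ_def)
  next
    case (2 j J)
    have e: "(\<chi> i. if i = j then 0 else zeroJ J c $ i) = zeroJ (insert j J) c"
      by (simp add: zeroJ_def vec_eq_iff)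
    note L = L0j[OF assms(1) per, of "zeroJ J c" j]
    show ?case unfolding 2(3) using L unfolding e .
  qed
  hence "(\<integral>\<^sup>+x. h x * indicator (hbox c (c + vec (2*pi))) x \<partial>lborel)
       = (\<integral>\<^sup>+x. h x * indicator (hbox (zeroJ UNIV c) (zeroJ UNIV c + vec (2*pi))) x \<partial>lborel)" .
  moreover have "zeroJ UNIV c = 0" by (simp add: zeroJ_def vec_eq_iff)
  ultimately show ?thesis by (simp add: torus_hbox)
qed

lemma per_rot0:
  assumes per: "\<And>x j. f (x + (2*pi) *\<^sub>R axis j 1) = f x"
  shows "f (rot 0 x) = f x"
proof -
  have "\<forall>j. \<exists>k::int. rot_pt 0 (x$j) = x$j + 0 - 2*pi * of_int k" using rot_pt_eq by blast
  then obtain m where m: "\<And>j. rot_pt 0 (x$j) = x$j - 2*pi * of_int (m j)" by (metis add_0_right)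
  define z where "z J = (\<chi> i. if i \<in> J then rot_pt 0 (x$i) else x$i)" for J
  have "f (z J) = f x" for J
  proof (induction J rule: finite_induct[OF finite])
    case 1 thus ?case by (simp add: z_def)
  next
    case (2 j J)
    have e: "z (insert j J) = z J + (2*pi * of_int (- m j)) *\<^sub>R axis j (1::real)"
      using 2 by (auto simp: z_def vec_eq_iff axis_def m)
    have "f (z (insert j J)) = f (z J + (2*pi * of_int (- m j)) *\<^sub>R axis j (1::real))" by (simp only: e)
    also have "\<dots> = f (z J)" by (rule per_int[of f j], rule per)
    also have "\<dots> = f x" by (rule 2)
    finally show ?case .
  qed
  moreover have "z UNIV = rot 0 x" by (simp add: z_def rot_def)
  ultimately show ?thesis by metis
qed




lemma rot_per: "rot t (x + (2*pi) *\<^sub>R axis j 1) = rot t x"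
proof -
  have "rot_pt t ((x + (2*pi) *\<^sub>R axis j 1)$i) = rot_pt t (x$i)" for i
  proof (cases "i = j")
    case True
    hence "(x + (2*pi) *\<^sub>R axis j 1)$i = x$i + 2*pi" by (simp add: axis_def)
    thus ?thesis by (simp add: rot_pt_period)
  next
    case False
    hence "(x + (2*pi) *\<^sub>R axis j 1)$i = x$i" by (simp add: axis_def)
    thus ?thesis by simp
  qed
  thus ?thesis by (simp add: rot_def vec_eq_iff)
qed

lemma rho_nonneg:
  assumes per: "\<And>x j. \<rho> (x + (2*pi) *\<^sub>R axis j 1) = \<rho> x" and nn: "\<forall>\<omega>\<in>torus. \<rho> \<omega> \<ge> (0::real)"
  shows "\<rho> x \<ge> 0"
proof -
  have "\<rho> (rot 0 x) = \<rho> x" by (rule per_rot0, rule per)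
  moreover have "\<rho> (rot 0 x) \<ge> 0" using nn rot_in_torus by blast
  ultimately show ?thesis by simp
qed

lemma nn_hbox:
  fixes \<rho> :: "real^'n \<Rightarrow> real"
  assumes cont: "continuous_on UNIV \<rho>" and nn: "\<And>x. 0 \<le> \<rho> x"
  shows "(\<integral>\<^sup>+x. ennreal (\<rho> x) * indicator (hbox c d) x \<partial>lborel) = ennreal (integral (cbox c d) \<rho>)"
proof -
  have [measurable]: "\<rho> \<in> borel_measurable borel" by (rule borel_measurable_continuous_onI[OF cont])
  have int: "(\<rho> has_integral integral (cbox c d) \<rho>) (cbox c d)"
    by (rule integrable_integral, rule integrable_continuous, rule continuous_on_subset[OF cont]) auto
  have sub1: "hbox c d \<subseteq> cbox c d" by (auto simp: hbox_def mem_box_cart less_imp_le)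
  have sub2: "box c d \<subseteq> hbox c d" by (auto simp: hbox_def mem_box_cart less_imp_le)
  have neg1: "negligible {x \<in> hbox c d - cbox c d. \<rho> x \<noteq> 0}"
    using sub1 by (intro negligible_subset[OF negligible_empty]) auto
  have neg2: "negligible {x \<in> cbox c d - hbox c d. \<rho> x \<noteq> 0}"
    using sub2 by (intro negligible_subset[OF negligible_frontier_interval]) auto
  have "(\<rho> has_integral integral (cbox c d) \<rho>) (hbox c d)"
    using has_integral_spike_set_eq[OF neg1 neg2] int by simp
  hence I: "((\<lambda>x. if x \<in> hbox c d then \<rho> x else 0) has_integral integral (cbox c d) \<rho>) UNIV"
    by (simp add: has_integral_restrict_UNIV)
  have "integral\<^sup>N lborel (\<lambda>x. if x \<in> hbox c d then \<rho> x else 0) = integral (cbox c d) \<rho>"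
    by (rule nn_integral_has_integral_lborel[OF _ _ I]) (auto simp: nn)
  moreover have "(\<lambda>x. ennreal (if x \<in> hbox c d then \<rho> x else 0)) = (\<lambda>x. ennreal (\<rho> x) * indicator (hbox c d) x)"
    by (auto simp: indicator_def)
  ultimately show ?thesis by simp
qed

lemma lo_hi_bounds:
  assumes q: "q > 0" and s: "\<sigma> \<in> Cells q"
  shows "0 \<le> lo q \<sigma> $ j" "hi q \<sigma> $ j \<le> 2*pi" "lo q \<sigma> $ j < hi q \<sigma> $ j"
proof -
  have a: "1 \<le> \<sigma> j" "\<sigma> j \<le> q" using s by (auto simp: Cells_def)
  hence "real (\<sigma> j) \<ge> 1" "real (\<sigma> j) \<le> real q" by simp_all
  thus "0 \<le> lo q \<sigma> $ j" "hi q \<sigma> $ j \<le> 2*pi" "lo q \<sigma> $ j < hi q \<sigma> $ j"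
    using q by (auto simp: lo_def hi_def field_simps)
qed

lemma Tconf_shift_iff:
  assumes q: "q > 0" and s: "\<sigma> \<in> Cells q" and x: "x \<in> hbox (- vec t) (- vec t + vec (2*pi))"
  shows "Tconf q (rot t x) = \<sigma> \<longleftrightarrow> x \<in> hbox (lo q \<sigma> - vec t) (hi q \<sigma> - vec t)"
proof -
  have "Tcell q (rot_pt t (x$j)) = \<sigma> j \<longleftrightarrow> lo q \<sigma> $ j - t \<le> x$j \<and> x$j < hi q \<sigma> $ j - t" for j
  proof -
    have "- t \<le> x$j \<and> x$j < 2*pi - t" using x by (simp add: hbox_def)
    hence xj: "0 \<le> x$j + t" "x$j + t < 2*pi" by linarith+
    hence r: "rot_pt t (x$j) = x$j + t" by (rule rot_pt_in)
    have "1 \<le> \<sigma> j" using s by (auto simp: Cells_def)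
    from Tcell_eq[OF q xj(1) this] show ?thesis unfolding r lo_def hi_def by auto
  qed
  thus ?thesis by (auto simp: Tconf_def rot_def hbox_def fun_eq_iff)
qed

lemma emeasure_cell:
  fixes \<rho> :: "real^'n \<Rightarrow> real"
  assumes q: "q > 0" and s: "\<sigma> \<in> Cells q" and cont: "continuous_on UNIV \<rho>"
    and per: "\<And>x j. \<rho> (x + (2*pi) *\<^sub>R axis j 1) = \<rho> x" and nn: "\<And>x. 0 \<le> \<rho> x"
    and mu: "\<mu>N = density torus_leb (\<lambda>\<omega>. ennreal (\<rho> \<omega>))"
  shows "emeasure \<mu>N {\<omega> \<in> torus. Tconf q (rot t \<omega>) = \<sigma>}
       = ennreal (integral (cbox (lo q \<sigma> - vec t) (hi q \<sigma> - vec t)) \<rho>)"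
proof -
  have [measurable]: "\<rho> \<in> borel_measurable borel" by (rule borel_measurable_continuous_onI[OF cont])
  have tor[measurable]: "torus \<in> sets (borel :: (real^'n) measure)" unfolding torus_hbox by (rule hbox_borel)
  define A where "A = {\<omega> \<in> torus. Tconf q (rot t \<omega>) = \<sigma>}"
  have "A = torus \<inter> {x. Tconf q (rot t x) = \<sigma>}" by (auto simp: A_def)
  hence Ab: "A \<in> sets borel" using Tconf_set_borel[OF q, of t \<sigma>] tor by (simp add: sets.Int)
  have Asets: "A \<in> sets torus_leb" unfolding torus_leb_def
    by (subst sets_restrict_space_iff) (use Ab in \<open>auto simp: A_def\<close>)
  have rm: "(\<lambda>\<omega>. ennreal (\<rho> \<omega>)) \<in> borel_measurable torus_leb"
    unfolding torus_leb_def by (rule measurable_restrict_space1) simp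
  define h where "h x = ennreal (\<rho> x) * indicator {x. Tconf q (rot t x) = \<sigma>} x" for x
  have hm: "h \<in> borel_measurable borel" unfolding h_def using Tconf_set_borel[OF q, of t \<sigma>] by measurable
  have hper: "h (x + (2*pi) *\<^sub>R axis j 1) = h x" for x j
    unfolding h_def by (simp add: per rot_per indicator_def)
  have "emeasure \<mu>N A = (\<integral>\<^sup>+x. ennreal (\<rho> x) * indicator A x \<partial>torus_leb)"
    unfolding mu by (rule emeasure_density[OF rm Asets])
  also have "\<dots> = (\<integral>\<^sup>+x. ennreal (\<rho> x) * indicator A x * indicator torus x \<partial>lborel)"
    unfolding torus_leb_def by (rule nn_integral_restrict_space) simp
  also have "\<dots> = (\<integral>\<^sup>+x. h x * indicator torus x \<partial>lborel)"
    by (rule nn_integral_cong) (auto simp: h_def A_def indicator_def)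
  also have "\<dots> = (\<integral>\<^sup>+x. h x * indicator (hbox (- vec t) (- vec t + vec (2*pi))) x \<partial>lborel)"
    by (rule L0[OF hm hper, symmetric])
  also have "\<dots> = (\<integral>\<^sup>+x. ennreal (\<rho> x) * indicator (hbox (lo q \<sigma> - vec t) (hi q \<sigma> - vec t)) x \<partial>lborel)"
  proof (rule nn_integral_cong)
    fix x :: "real^'n"
    show "h x * indicator (hbox (- vec t) (- vec t + vec (2*pi))) x = ennreal (\<rho> x) * indicator (hbox (lo q \<sigma> - vec t) (hi q \<sigma> - vec t)) x"
    proof (cases "x \<in> hbox (- vec t) (- vec t + vec (2*pi))")
      case True
      thus ?thesis using Tconf_shift_iff[OF q s True] by (simp add: h_def indicator_def)
    next
      case False
      have "x \<notin> hbox (lo q \<sigma> - vec t) (hi q \<sigma> - vec t)"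
      proof
        assume "x \<in> hbox (lo q \<sigma> - vec t) (hi q \<sigma> - vec t)"
        hence H: "lo q \<sigma> $ j - t \<le> x$j \<and> x$j < hi q \<sigma> $ j - t" for j by (simp add: hbox_def)
        have "- t \<le> x$j \<and> x$j < - t + 2*pi" for j
          using H[of j] lo_hi_bounds[OF q s, of j] by linarith
        hence "x \<in> hbox (- vec t) (- vec t + vec (2*pi))" by (simp add: hbox_def)
        thus False using False by simp
      qed
      thus ?thesis using False by simp
    qed
  qed
  also have "\<dots> = ennreal (integral (cbox (lo q \<sigma> - vec t) (hi q \<sigma> - vec t)) \<rho>)"
    by (rule nn_hbox[OF cont nn])
  finally show ?thesis unfolding A_def .
qed




lemma scale_identity:
  fixes \<rho> :: "real^'n \<Rightarrow> real"
  assumes cont: "continuous_on UNIV \<rho>" and pos: "\<And>k. 0 < m$k"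
  shows "integral (cbox c (c + m)) \<rho> = (\<Prod>k\<in>UNIV. m$k) * integral (cbox 0 1) (\<lambda>y. \<rho> (c + (\<chi> k. m$k * y$k)))"
proof -
  define f where "f z = \<rho> (c + z)" for z
  have fc: "continuous_on UNIV f" unfolding f_def by (intro continuous_on_compose2[OF cont] continuous_intros) auto
  have I1: "integral (cbox 0 m) f = integral (cbox c (c + m)) \<rho>"
  proof -
    have "integral (cbox 0 m) (\<rho> \<circ> ((+) c)) = integral (cbox (0 + c) (m + c)) \<rho>"
      by (rule integral_shift_cbox_plus)
    moreover have "\<rho> \<circ> ((+) c) = f" by (auto simp: f_def)
    ultimately show ?thesis by (simp add: add.commute)
  qed
  have hf: "(f has_integral integral (cbox 0 m) f) (cbox 0 m)"
    by (rule integrable_integral, rule integrable_continuous, rule continuous_on_subset[OF fc]) auto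
  have mnz: "\<And>k. m$k \<noteq> 0" using pos by (metis less_irrefl)
  have st: "((\<lambda>x. f (\<chi> k. m$k * x$k)) has_integral integral (cbox 0 m) f /\<^sub>R \<bar>prod (\<lambda>k. m$k) UNIV\<bar>)
            ((\<lambda>x. \<chi> k. x$k / m$k) ` (cbox 0 m))"
    by (rule has_integral_stretch_cart[OF hf mnz])
  have img: "(\<lambda>x. \<chi> k. x$k / m$k) ` (cbox 0 m) = cbox 0 1"
  proof -
    have e: "(\<lambda>x. \<chi> k. x$k / m$k) = (\<lambda>x. \<chi> k. (1 / m$k) * x$k)" by auto
    have "0 \<in> cbox 0 m" using pos by (simp add: mem_box_cart less_imp_le)
    hence ne: "cbox 0 m \<noteq> {}" by blast
    have "(\<lambda>x. \<chi> k. (1 / m$k) * x$k) ` cbox 0 m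
       = cbox (\<chi> k. min ((1 / m$k) * (0::real^'n)$k) ((1 / m$k) * m$k)) (\<chi> k. max ((1 / m$k) * (0::real^'n)$k) ((1 / m$k) * m$k))"
      using image_stretch_interval_cart[of "\<lambda>k. 1 / m$k" 0 m] ne by simp
    also have "(\<chi> k. min ((1 / m$k) * (0::real^'n)$k) ((1 / m$k) * m$k)) = 0"
      using mnz by (simp add: vec_eq_iff)
    also have "(\<chi> k. max ((1 / m$k) * (0::real^'n)$k) ((1 / m$k) * m$k)) = 1"
      using mnz by (simp add: vec_eq_iff)
    finally show ?thesis unfolding e .
  qed
  have pp: "\<bar>prod (\<lambda>k. m$k) UNIV\<bar> = (\<Prod>k\<in>UNIV. m$k)"
    using pos by (intro abs_of_pos prod_pos) auto
  have "integral (cbox 0 1) (\<lambda>x. f (\<chi> k. m$k * x$k)) = integral (cbox 0 m) f / (\<Prod>k\<in>UNIV. m$k)"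
    using integral_unique[OF st] unfolding img pp by (simp add: divide_inverse_commute)
  moreover have "(\<Prod>k\<in>UNIV. m$k) \<noteq> 0" using pp pos by (metis mnz prod_zero_iff finite)
  ultimately show ?thesis unfolding I1[symmetric] by (simp add: f_def)
qed


lemma G:
  fixes \<rho> :: "real^'n \<Rightarrow> real" and c m :: "'a \<Rightarrow> real^'n"
  assumes cont: "continuous_on UNIV \<rho>"
    and c: "(c \<longlongrightarrow> c0) F" and m: "(m \<longlongrightarrow> m0) F"
    and pos: "eventually (\<lambda>x. \<forall>k. 0 < m x $ k) F"
  shows "((\<lambda>x. integral (cbox (c x) (c x + m x)) \<rho> / (\<Prod>k\<in>UNIV. m x $ k))
          \<longlongrightarrow> integral (cbox 0 1) (\<lambda>y. \<rho> (c0 + (\<chi> k. m0$k * y$k)))) F"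
proof -
  define \<Phi> where "\<Phi> p = integral (cbox 0 1) (\<lambda>y. \<rho> (fst p + (\<chi> k. snd p $ k * y$k)))" for p :: "(real^'n) \<times> (real^'n)"
  have "continuous_on UNIV \<Phi>"
    unfolding \<Phi>_def
  proof (rule integral_continuous_on_param)
    show "continuous_on (UNIV \<times> cbox 0 1) (\<lambda>(p, y). \<rho> (fst p + (\<chi> k. snd p $ k * y $ k)))"
      unfolding case_prod_beta
      by (intro continuous_on_compose2[OF cont] continuous_intros) auto
  qed
  hence ic: "isCont \<Phi> (c0, m0)" by (simp add: continuous_on_eq_continuous_at)
  have "((\<lambda>x. \<Phi> (c x, m x)) \<longlongrightarrow> \<Phi> (c0, m0)) F"
    by (rule isCont_tendsto_compose[OF ic]) (intro tendsto_Pair c m)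
  moreover have "eventually (\<lambda>x. \<Phi> (c x, m x) = integral (cbox (c x) (c x + m x)) \<rho> / (\<Prod>k\<in>UNIV. m x $ k)) F"
    using pos
  proof eventually_elim
    case (elim x)
    have nz: "(\<Prod>k\<in>UNIV. m x $ k) \<noteq> 0" using elim by (simp add: prod_zero_iff) (metis less_irrefl)
    show ?case using scale_identity[OF cont, of "m x" "c x"] elim nz by (simp add: \<Phi>_def)
  qed
  ultimately show ?thesis unfolding \<Phi>_def by (auto dest: tendsto_cong[THEN iffD1, rotated])
qed


lemma shift_diff:
  fixes \<rho> :: "real^'n \<Rightarrow> real" and a b s :: "real^'n"
  assumes cont: "continuous_on UNIV \<rho>" and ab: "\<And>k. a$k < b$k"
    and e0: "0 < \<epsilon>" and e1: "\<epsilon> < b$i - a$i"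
  defines "mm \<equiv> (\<chi> k. if k = i then \<epsilon> else b$k - a$k)"
    and "cL \<equiv> a - s - \<epsilon> *\<^sub>R axis i 1"
    and "cU \<equiv> (\<chi> k. if k = i then b$i - s$i - \<epsilon> else a$k - s$k)"
  shows "integral (cbox (a - (s + \<epsilon> *\<^sub>R axis i 1)) (b - (s + \<epsilon> *\<^sub>R axis i 1))) \<rho> - integral (cbox (a - s) (b - s)) \<rho>
      = integral (cbox cL (cL + mm)) \<rho> - integral (cbox cU (cU + mm)) \<rho>"
proof -
  have int: "\<rho> integrable_on cbox x y" for x y
    by (rule integrable_continuous, rule continuous_on_subset[OF cont]) auto
  have B: "axis i (1::real) \<in> Basis" by (simp add: Basis_vec_def) blast
  define lon where "lon = a - (s + \<epsilon> *\<^sub>R axis i 1)"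
  define hin where "hin = b - (s + \<epsilon> *\<^sub>R axis i 1)"
  define c1 where "c1 = a$i - s$i"
  define c2 where "c2 = b$i - s$i - \<epsilon>"
  define Mid where "Mid = cbox (\<chi> k. if k = i then c1 else a$k - s$k) hin"
  have inner: "\<And>x::real^'n. x \<bullet> axis i 1 = x$i" by (simp add: inner_axis)
  have S1: "integral (cbox lon hin) \<rho> = integral (cbox lon hin \<inter> {x. x$i \<le> c1}) \<rho> + integral (cbox lon hin \<inter> {x. x$i \<ge> c1}) \<rho>"
    using integral_split[OF int B, of lon hin c1] by (simp add: inner)
  have S2: "integral (cbox (a - s) (b - s)) \<rho> = integral (cbox (a - s) (b - s) \<inter> {x. x$i \<le> c2}) \<rho> + integral (cbox (a - s) (b - s) \<inter> {x. x$i \<ge> c2}) \<rho>"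
    using integral_split[OF int B, of "a - s" "b - s" c2] by (simp add: inner)
  have E1: "cbox lon hin \<inter> {x. x$i \<le> c1} = cbox cL (cL + mm)"
  proof -
    have "cbox lon hin \<inter> {x. x$i \<le> c1} = cbox lon (\<chi> k. if k = i then min (hin$i) c1 else hin$k)"
      using interval_split_cart(1)[of lon hin i c1] by (simp add: interval_cbox_cart)
    moreover have "lon = cL" by (simp add: lon_def cL_def algebra_simps)
    moreover have "(\<chi> k. if k = i then min (hin$i) c1 else hin$k) = cL + mm"
      using e1 by (auto simp: vec_eq_iff hin_def cL_def mm_def c1_def axis_def min_def)
    ultimately show ?thesis by simp
  qed
  have E2: "cbox lon hin \<inter> {x. x$i \<ge> c1} = Mid"
  proof -
    have "cbox lon hin \<inter> {x. x$i \<ge> c1} = cbox (\<chi> k. if k = i then max (lon$i) c1 else lon$k) hin"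
      using interval_split_cart(2)[where a=lon and b=hin and k=i and c=c1] by (simp add: interval_cbox_cart)
    moreover have "(\<chi> k. if k = i then max (lon$i) c1 else lon$k) = (\<chi> k. if k = i then c1 else a$k - s$k)"
      using e0 by (auto simp: vec_eq_iff lon_def c1_def axis_def max_def)
    ultimately show ?thesis by (simp add: Mid_def)
  qed
  have E3: "cbox (a - s) (b - s) \<inter> {x. x$i \<le> c2} = Mid"
  proof -
    have "cbox (a - s) (b - s) \<inter> {x. x$i \<le> c2} = cbox (a - s) (\<chi> k. if k = i then min ((b - s)$i) c2 else (b - s)$k)"
      using interval_split_cart(1)[of "a - s" "b - s" i c2] by (simp add: interval_cbox_cart)
    moreover have "(\<chi> k. if k = i then min ((b - s)$i) c2 else (b - s)$k) = hin"
      using e0 by (auto simp: vec_eq_iff hin_def c2_def axis_def min_def)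
    moreover have "a - s = (\<chi> k. if k = i then c1 else a$k - s$k)"
      by (auto simp: vec_eq_iff c1_def)
    ultimately show ?thesis by (simp add: Mid_def)
  qed
  have E4: "cbox (a - s) (b - s) \<inter> {x. x$i \<ge> c2} = cbox cU (cU + mm)"
  proof -
    have "cbox (a - s) (b - s) \<inter> {x. x$i \<ge> c2} = cbox (\<chi> k. if k = i then max ((a - s)$i) c2 else (a - s)$k) (b - s)"
      using interval_split_cart(2)[where a="a - s" and b="b - s" and k=i and c=c2] by (simp add: interval_cbox_cart)
    moreover have "(\<chi> k. if k = i then max ((a - s)$i) c2 else (a - s)$k) = cU"
      using e1 by (auto simp: vec_eq_iff cU_def c2_def max_def)
    moreover have "b - s = cU + mm"
      by (auto simp: vec_eq_iff cU_def mm_def)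
    ultimately show ?thesis by simp
  qed
  show ?thesis
    using S1 S2 unfolding E1 E2 E3 E4 lon_def[symmetric] hin_def[symmetric] by simp
qed


definition iS :: "'n set \<Rightarrow> real^'n" where "iS S = (\<chi> j. if j \<in> S then 1 else 0)"
definition Wt :: "real^'n \<Rightarrow> real^'n \<Rightarrow> 'n \<Rightarrow> real" where "Wt a b i = (\<Prod>k\<in>UNIV-{i}. b$k - a$k)"
definition mz :: "real^'n \<Rightarrow> real^'n \<Rightarrow> 'n \<Rightarrow> real^'n" where "mz a b i = (\<chi> k. if k = i then 0 else b$k - a$k)"
definition GL :: "(real^'n \<Rightarrow> real) \<Rightarrow> real^'n \<Rightarrow> real^'n \<Rightarrow> real \<Rightarrow> 'n \<Rightarrow> real" where
  "GL \<rho> a b t i = integral (cbox 0 1) (\<lambda>y. \<rho> ((a - vec t) + (\<chi> k. mz a b i $k * y$k)))"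
definition GU :: "(real^'n \<Rightarrow> real) \<Rightarrow> real^'n \<Rightarrow> real^'n \<Rightarrow> real \<Rightarrow> 'n \<Rightarrow> real" where
  "GU \<rho> a b t i = integral (cbox 0 1) (\<lambda>y. \<rho> ((\<chi> k. if k = i then b$i - t else a$k - t) + (\<chi> k. mz a b i $k * y$k)))"

lemma tele:
  fixes \<rho> :: "real^'n \<Rightarrow> real" and a b :: "real^'n"
  assumes cont: "continuous_on UNIV \<rho>" and ab: "\<And>k. a$k < b$k"
  shows "((\<lambda>\<epsilon>. (integral (cbox (a - (vec t + \<epsilon> *\<^sub>R iS S)) (b - (vec t + \<epsilon> *\<^sub>R iS S))) \<rho>
                 - integral (cbox (a - vec t) (b - vec t)) \<rho>) / \<epsilon>)
          \<longlongrightarrow> (\<Sum>i\<in>S. Wt a b i * (GL \<rho> a b t i - GU \<rho> a b t i))) (at_right 0)"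
proof (induction S rule: finite_induct[OF finite])
  case 1
  have "iS {} = (0::real^'n)" by (simp add: iS_def vec_eq_iff)
  thus ?case by simp
next
  case (2 i S)
  define P where "P \<epsilon> = vec t + \<epsilon> *\<^sub>R iS S" for \<epsilon>
  define I where "I s = integral (cbox (a - s) (b - s)) \<rho>" for s
  define mm where "mm \<epsilon> = (\<chi> k. if k = i then \<epsilon> else b$k - a$k)" for \<epsilon>
  define cL where "cL \<epsilon> = a - P \<epsilon> - \<epsilon> *\<^sub>R axis i 1" for \<epsilon>
  define cU where "cU \<epsilon> = (\<chi> k. if k = i then b$i - P \<epsilon> $i - \<epsilon> else a$k - P \<epsilon> $k)" for \<epsilon>
  have Pi: "P \<epsilon> $ i = t" for \<epsilon> using 2 by (simp add: P_def iS_def)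
  have Pins: "vec t + \<epsilon> *\<^sub>R iS (insert i S) = P \<epsilon> + \<epsilon> *\<^sub>R axis i 1" for \<epsilon>
    using 2 by (auto simp: P_def iS_def vec_eq_iff axis_def)
  have Wpos: "Wt a b i > 0" unfolding Wt_def using ab by (intro prod_pos) (auto simp: less_diff_eq)
  have prodmm: "(\<Prod>k\<in>UNIV. mm \<epsilon> $ k) = \<epsilon> * Wt a b i" for \<epsilon>
  proof -
    have "(\<Prod>k\<in>UNIV. mm \<epsilon> $ k) = mm \<epsilon> $ i * (\<Prod>k\<in>UNIV-{i}. mm \<epsilon> $ k)"
      by (rule prod.remove) auto
    also have "(\<Prod>k\<in>UNIV-{i}. mm \<epsilon> $ k) = Wt a b i"
      unfolding Wt_def by (rule prod.cong) (auto simp: mm_def)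
    finally show ?thesis by (simp add: mm_def)
  qed
  have wi: "0 < b$i - a$i" using ab by (simp add: less_diff_eq)
  have ev: "eventually (\<lambda>\<epsilon>. \<epsilon> \<in> {0<..<b$i - a$i}) (at_right 0)"
    by (rule eventually_at_right_real[OF wi])
  have mm_t: "(mm \<longlongrightarrow> mz a b i) (at_right 0)"
  proof -
    have "mm = (\<lambda>\<epsilon>. mz a b i + \<epsilon> *\<^sub>R axis i 1)"
      by (auto simp: mm_def mz_def vec_eq_iff axis_def fun_eq_iff)
    moreover have "((\<lambda>\<epsilon>. mz a b i + \<epsilon> *\<^sub>R axis i 1) \<longlongrightarrow> mz a b i + 0 *\<^sub>R axis i 1) (at_right 0)"
      by (intro tendsto_intros)
    ultimately show ?thesis by simp
  qed
  have posev: "eventually (\<lambda>\<epsilon>. \<forall>k. 0 < mm \<epsilon> $ k) (at_right 0)"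
    using ev by eventually_elim (auto simp: mm_def ab less_diff_eq)
  have cL_t: "(cL \<longlongrightarrow> a - vec t) (at_right 0)"
  proof -
    have "cL = (\<lambda>\<epsilon>. (a - vec t) - \<epsilon> *\<^sub>R (iS S + axis i 1))"
      by (auto simp: cL_def P_def fun_eq_iff algebra_simps)
    moreover have "((\<lambda>\<epsilon>. (a - vec t) - \<epsilon> *\<^sub>R (iS S + axis i 1)) \<longlongrightarrow> (a - vec t) - 0 *\<^sub>R (iS S + axis i 1)) (at_right 0)"
      by (intro tendsto_intros)
    ultimately show ?thesis by simp
  qed
  have cU_t: "(cU \<longlongrightarrow> (\<chi> k. if k = i then b$i - t else a$k - t)) (at_right 0)"
  proof -
    have "cU = (\<lambda>\<epsilon>. (\<chi> k. if k = i then b$i - t else a$k - t) - \<epsilon> *\<^sub>R (iS S + axis i 1))"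
      using 2 by (auto simp: cU_def P_def fun_eq_iff vec_eq_iff iS_def axis_def)
    moreover have "((\<lambda>\<epsilon>. (\<chi> k. if k = i then b$i - t else a$k - t) - \<epsilon> *\<^sub>R (iS S + axis i 1)) \<longlongrightarrow> (\<chi> k. if k = i then b$i - t else a$k - t) - 0 *\<^sub>R (iS S + axis i 1)) (at_right 0)"
      by (intro tendsto_intros)
    ultimately show ?thesis by simp
  qed
  have L: "((\<lambda>\<epsilon>. integral (cbox (cL \<epsilon>) (cL \<epsilon> + mm \<epsilon>)) \<rho> / (\<Prod>k\<in>UNIV. mm \<epsilon> $ k)) \<longlongrightarrow> GL \<rho> a b t i) (at_right 0)"
    unfolding GL_def by (rule G[OF cont cL_t mm_t posev])
  have U: "((\<lambda>\<epsilon>. integral (cbox (cU \<epsilon>) (cU \<epsilon> + mm \<epsilon>)) \<rho> / (\<Prod>k\<in>UNIV. mm \<epsilon> $ k)) \<longlongrightarrow> GU \<rho> a b t i) (at_right 0)"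
    unfolding GU_def by (rule G[OF cont cU_t mm_t posev])
  have step: "((\<lambda>\<epsilon>. (I (P \<epsilon> + \<epsilon> *\<^sub>R axis i 1) - I (P \<epsilon>)) / \<epsilon>) \<longlongrightarrow> Wt a b i * (GL \<rho> a b t i - GU \<rho> a b t i)) (at_right 0)"
  proof -
    have lim: "((\<lambda>\<epsilon>. Wt a b i * (integral (cbox (cL \<epsilon>) (cL \<epsilon> + mm \<epsilon>)) \<rho> / (\<Prod>k\<in>UNIV. mm \<epsilon> $ k)
          - integral (cbox (cU \<epsilon>) (cU \<epsilon> + mm \<epsilon>)) \<rho> / (\<Prod>k\<in>UNIV. mm \<epsilon> $ k))) \<longlongrightarrow> Wt a b i * (GL \<rho> a b t i - GU \<rho> a b t i)) (at_right 0)"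
      by (intro tendsto_intros L U)
    have "eventually (\<lambda>\<epsilon>. Wt a b i * (integral (cbox (cL \<epsilon>) (cL \<epsilon> + mm \<epsilon>)) \<rho> / (\<Prod>k\<in>UNIV. mm \<epsilon> $ k)
          - integral (cbox (cU \<epsilon>) (cU \<epsilon> + mm \<epsilon>)) \<rho> / (\<Prod>k\<in>UNIV. mm \<epsilon> $ k)) = (I (P \<epsilon> + \<epsilon> *\<^sub>R axis i 1) - I (P \<epsilon>)) / \<epsilon>) (at_right 0)"
      using ev
    proof eventually_elim
      case (elim \<epsilon>)
      hence e0: "0 < \<epsilon>" and e1: "\<epsilon> < b$i - a$i" by auto
      have sd: "I (P \<epsilon> + \<epsilon> *\<^sub>R axis i 1) - I (P \<epsilon>) = integral (cbox (cL \<epsilon>) (cL \<epsilon> + mm \<epsilon>)) \<rho> - integral (cbox (cU \<epsilon>) (cU \<epsilon> + mm \<epsilon>)) \<rho>"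
        unfolding I_def cL_def cU_def mm_def by (rule shift_diff[OF cont ab e0 e1])
      show ?case unfolding sd prodmm using e0 Wpos by (simp add: field_simps)
    qed
    thus ?thesis using lim by (auto dest: tendsto_cong[THEN iffD1, rotated])
  qed
  have "((\<lambda>\<epsilon>. (I (P \<epsilon>) - I (vec t)) / \<epsilon> + (I (P \<epsilon> + \<epsilon> *\<^sub>R axis i 1) - I (P \<epsilon>)) / \<epsilon>)
         \<longlongrightarrow> (\<Sum>i\<in>S. Wt a b i * (GL \<rho> a b t i - GU \<rho> a b t i)) + Wt a b i * (GL \<rho> a b t i - GU \<rho> a b t i)) (at_right 0)"
    using 2(3) step unfolding I_def P_def by (intro tendsto_add)
  moreover have "(\<lambda>\<epsilon>. (I (P \<epsilon>) - I (vec t)) / \<epsilon> + (I (P \<epsilon> + \<epsilon> *\<^sub>R axis i 1) - I (P \<epsilon>)) / \<epsilon>)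
      = (\<lambda>\<epsilon>. (I (vec t + \<epsilon> *\<^sub>R iS (insert i S)) - I (vec t)) / \<epsilon>)"
    unfolding Pins by (simp add: fun_eq_iff diff_divide_distrib)
  ultimately show ?case using 2 unfolding I_def by (simp add: add.commute)
qed




definition pred :: "nat \<Rightarrow> ('n \<Rightarrow> nat) \<Rightarrow> 'n \<Rightarrow> ('n \<Rightarrow> nat)" where
  "pred q \<sigma> i = \<sigma>(i := if \<sigma> i = 1 then q else \<sigma> i - 1)"

lemma plus1_Cells: "q > 0 \<Longrightarrow> \<sigma> \<in> Cells q \<Longrightarrow> plus1 q \<sigma> i \<in> Cells q"
  unfolding Cells_def plus1_def by (auto simp: less_Suc_eq_le[symmetric])

lemma pred_Cells:
  assumes "q > 0" "\<sigma> \<in> Cells q" shows "pred q \<sigma> i \<in> Cells q"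
proof -
  have r: "\<forall>j. 1 \<le> \<sigma> j \<and> \<sigma> j \<le> q" using assms(2) by (simp add: Cells_def)
  have ri: "1 \<le> \<sigma> i" "\<sigma> i \<le> q" using r by auto
  have v: "(if \<sigma> i = 1 then q else \<sigma> i - 1) \<in> {1..q}" using ri assms(1) by auto
  show ?thesis unfolding Cells_def pred_def using v r by auto
qed

lemma pred_plus1: "q > 0 \<Longrightarrow> \<sigma> \<in> Cells q \<Longrightarrow> pred q (plus1 q \<sigma> i) i = \<sigma>"
proof -
  assume q: "q > 0" and s: "\<sigma> \<in> Cells q"
  hence r: "1 \<le> \<sigma> i" "\<sigma> i \<le> q" by (auto simp: Cells_def)
  show ?thesis
  proof (cases "\<sigma> i = q")
    case True thus ?thesis by (auto simp: pred_def plus1_def fun_eq_iff)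
  next
    case False
    hence "\<sigma> i < q" using r by simp
    hence "\<sigma> i mod q = \<sigma> i" by simp
    thus ?thesis using r by (auto simp: pred_def plus1_def fun_eq_iff)
  qed
qed

lemma plus1_pred: "q > 0 \<Longrightarrow> \<sigma> \<in> Cells q \<Longrightarrow> plus1 q (pred q \<sigma> i) i = \<sigma>"
proof -
  assume q: "q > 0" and s: "\<sigma> \<in> Cells q"
  hence r: "1 \<le> \<sigma> i" "\<sigma> i \<le> q" by (auto simp: Cells_def)
  show ?thesis
  proof (cases "\<sigma> i = 1")
    case True thus ?thesis by (auto simp: pred_def plus1_def fun_eq_iff)
  next
    case False
    hence "\<sigma> i - 1 < q" "\<sigma> i \<ge> 2" using r by auto
    hence "(\<sigma> i - 1) mod q = \<sigma> i - 1" by simp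
    thus ?thesis using r False by (auto simp: pred_def plus1_def fun_eq_iff)
  qed
qed

lemma sum_reindex_plus1:
  assumes q: "q > 0"
  shows "(\<Sum>\<sigma>\<in>Cells q. f \<sigma> * g (plus1 q \<sigma> i)) = (\<Sum>\<sigma>\<in>Cells q. f (pred q \<sigma> i) * (g \<sigma> :: real))"
  by (rule sum.reindex_bij_witness[where j="\<lambda>\<sigma>. plus1 q \<sigma> i" and i="\<lambda>\<sigma>. pred q \<sigma> i"])
     (auto simp: q pred_plus1 plus1_pred plus1_Cells pred_Cells)

locale Setting =
  fixes q :: nat and \<rho> :: "real^'n \<Rightarrow> real" and \<mu>N :: "(real^'n) measure"
  assumes q2: "q \<ge> 2" and cont: "continuous_on UNIV \<rho>"
    and per: "\<And>x j. \<rho> (x + (2*pi) *\<^sub>R axis j 1) = \<rho> x"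
    and nn: "\<And>x. 0 \<le> \<rho> x"
    and mu: "\<mu>N = density torus_leb (\<lambda>\<omega>. ennreal (\<rho> \<omega>))"
    and prob: "prob_space \<mu>N"
begin

lemma q: "q > 0" using q2 by simp

definition A :: "real \<Rightarrow> ('n \<Rightarrow> nat) \<Rightarrow> (real^'n) set" where
  "A t \<sigma> = {\<omega> \<in> torus. Tconf q (rot t \<omega>) = \<sigma>}"

definition Pm :: "real \<Rightarrow> ('n \<Rightarrow> nat) \<Rightarrow> real" where
  "Pm t \<sigma> = measure \<mu>N (A t \<sigma>)"

lemma tor: "torus \<in> sets (borel :: (real^'n) measure)"
  unfolding torus_hbox by (rule hbox_borel)

lemma space_mu: "space \<mu>N = torus"
  by (simp add: mu torus_leb_def space_restrict_space)

lemma sets_mu: "sets \<mu>N = sets torus_leb"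
  by (simp add: mu)

lemma A_sets: "A t \<sigma> \<in> sets \<mu>N"
proof -
  have "A t \<sigma> = torus \<inter> {x. Tconf q (rot t x) = \<sigma>}" by (auto simp: A_def)
  hence Ab: "A t \<sigma> \<in> sets borel" using Tconf_set_borel[OF q, of t \<sigma>] tor by (simp add: sets.Int)
  show ?thesis unfolding sets_mu torus_leb_def
    by (subst sets_restrict_space_iff) (use Ab tor in \<open>auto simp: A_def\<close>)
qed

lemma fin: "emeasure \<mu>N X < \<infinity>"
  using prob_space.emeasure_le_1[OF prob, of X] by (simp add: order_le_less_trans)

lemma Pm_eq: "\<sigma> \<in> Cells q \<Longrightarrow> Pm t \<sigma> = integral (cbox (lo q \<sigma> - vec t) (hi q \<sigma> - vec t)) \<rho>"
proof -
  assume s: "\<sigma> \<in> Cells q"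
  have e: "emeasure \<mu>N (A t \<sigma>) = ennreal (integral (cbox (lo q \<sigma> - vec t) (hi q \<sigma> - vec t)) \<rho>)"
    unfolding A_def by (rule emeasure_cell[OF q s cont per nn mu])
  have "integral (cbox (lo q \<sigma> - vec t) (hi q \<sigma> - vec t)) \<rho> \<ge> 0"
    by (rule integral_nonneg[OF integrable_continuous[OF continuous_on_subset[OF cont]]]) (auto simp: nn)
  thus ?thesis using e by (simp add: Pm_def measure_def)
qed

lemma Pm_nonneg: "Pm t \<sigma> \<ge> 0" by (simp add: Pm_def)

lemma int_eq: "integral\<^sup>L \<mu>N (\<lambda>\<omega>. h (Tconf q (rot t \<omega>))) = (\<Sum>\<sigma>\<in>Cells q. h \<sigma> * Pm t \<sigma>)"
proof -
  have "integral\<^sup>L \<mu>N (\<lambda>\<omega>. h (Tconf q (rot t \<omega>))) = integral\<^sup>L \<mu>N (\<lambda>\<omega>. \<Sum>\<sigma>\<in>Cells q. h \<sigma> * indicator (A t \<sigma>) \<omega>)"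
  proof (rule Bochner_Integration.integral_cong[OF refl])
    fix \<omega> assume "\<omega> \<in> space \<mu>N"
    hence w: "\<omega> \<in> torus" by (simp add: space_mu)
    have "(\<Sum>\<sigma>\<in>Cells q. h \<sigma> * indicator (A t \<sigma>) \<omega>) = (\<Sum>\<sigma>\<in>Cells q. if \<sigma> = Tconf q (rot t \<omega>) then h \<sigma> else 0)"
      by (rule sum.cong) (auto simp: A_def w indicator_def)
    also have "\<dots> = h (Tconf q (rot t \<omega>))" by (simp add: sum.delta[OF finite_Cells] Tconf_in_Cells[OF q])
    finally show "h (Tconf q (rot t \<omega>)) = (\<Sum>\<sigma>\<in>Cells q. h \<sigma> * indicator (A t \<sigma>) \<omega>)" by simp
  qed
  also have "\<dots> = (\<Sum>\<sigma>\<in>Cells q. integral\<^sup>L \<mu>N (\<lambda>\<omega>. h \<sigma> * indicator (A t \<sigma>) \<omega>))"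
    by (rule Bochner_Integration.integral_sum) (auto intro!: integrable_real_indicator A_sets fin)
  also have "\<dots> = (\<Sum>\<sigma>\<in>Cells q. h \<sigma> * Pm t \<sigma>)"
  proof (rule sum.cong[OF refl])
    fix \<sigma>
    have "A t \<sigma> \<inter> space \<mu>N = A t \<sigma>" by (auto simp: A_def space_mu)
    thus "integral\<^sup>L \<mu>N (\<lambda>\<omega>. h \<sigma> * indicator (A t \<sigma>) \<omega>) = h \<sigma> * Pm t \<sigma>"
      by (simp add: Pm_def)
  qed
  finally show ?thesis .
qed


definition J :: "real \<Rightarrow> ('n \<Rightarrow> nat) \<Rightarrow> 'n \<Rightarrow> real" where
  "J t \<sigma> i = Wt (lo q \<sigma>) (hi q \<sigma>) i * GU \<rho> (lo q \<sigma>) (hi q \<sigma>) t i"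

lemma lohi: "\<sigma> \<in> Cells q \<Longrightarrow> lo q \<sigma> $ k < hi q \<sigma> $ k"
  using lo_hi_bounds[OF q] by blast

lemma Pm_lim:
  assumes s: "\<sigma> \<in> Cells q"
  shows "((\<lambda>\<epsilon>. (Pm (t + \<epsilon>) \<sigma> - Pm t \<sigma>) / \<epsilon>)
     \<longlongrightarrow> (\<Sum>i\<in>UNIV. Wt (lo q \<sigma>) (hi q \<sigma>) i * (GL \<rho> (lo q \<sigma>) (hi q \<sigma>) t i - GU \<rho> (lo q \<sigma>) (hi q \<sigma>) t i))) (at_right 0)"
proof -
  have v: "vec t + \<epsilon> *\<^sub>R iS UNIV = vec (t + \<epsilon>)" for \<epsilon> by (simp add: iS_def vec_eq_iff)
  show ?thesis
    using tele[OF cont lohi[OF s], of t UNIV] unfolding v Pm_eq[OF s] .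
qed

lemma GU_nonneg: "GU \<rho> a b t i \<ge> 0"
  unfolding GU_def
  by (rule integral_nonneg[OF integrable_continuous]) (auto simp: nn intro!: continuous_on_compose2[OF cont] continuous_intros)

lemma Wt_nonneg: assumes s: "\<sigma> \<in> Cells q" shows "Wt (lo q \<sigma>) (hi q \<sigma>) i \<ge> 0"
  unfolding Wt_def using lohi[OF s] by (intro prod_nonneg) (auto simp: less_imp_le)

lemma J_nonneg: assumes s: "\<sigma> \<in> Cells q" shows "J t \<sigma> i \<ge> 0"
  unfolding J_def using Wt_nonneg[OF s, of i] GU_nonneg[of "lo q \<sigma>" "hi q \<sigma>" t i] by simp

lemma GL_eq:
  assumes s: "\<sigma> \<in> Cells q"
  shows "Wt (lo q \<sigma>) (hi q \<sigma>) i * GL \<rho> (lo q \<sigma>) (hi q \<sigma>) t i = J t (pred q \<sigma> i) i"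
proof -
  let ?s = "pred q \<sigma> i"
  have r: "1 \<le> \<sigma> i" "\<sigma> i \<le> q" using s by (auto simp: Cells_def)
  have lok: "lo q ?s $ k = lo q \<sigma> $ k" "hi q ?s $ k = hi q \<sigma> $ k" if "k \<noteq> i" for k
    using that by (simp_all add: lo_def hi_def pred_def)
  have W: "Wt (lo q ?s) (hi q ?s) i = Wt (lo q \<sigma>) (hi q \<sigma>) i"
    unfolding Wt_def by (rule prod.cong) (auto simp: lok)
  have M: "mz (lo q ?s) (hi q ?s) i = mz (lo q \<sigma>) (hi q \<sigma>) i"
    by (auto simp: mz_def vec_eq_iff lok)
  define \<delta> where "\<delta> = (if \<sigma> i = 1 then 2*pi else 0)"
  have corner: "(\<chi> k. if k = i then hi q ?s $ i - t else lo q ?s $ k - t) = (lo q \<sigma> - vec t) + \<delta> *\<^sub>R axis i 1"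
  proof -
    have "hi q ?s $ i - t = lo q \<sigma> $ i - t + \<delta>"
    proof (cases "\<sigma> i = 1")
      case True thus ?thesis using q by (simp add: hi_def lo_def pred_def \<delta>_def)
    next
      case False
      hence "real (\<sigma> i - 1) = real (\<sigma> i) - 1" using r by (simp add: of_nat_diff)
      thus ?thesis using False by (simp add: hi_def lo_def pred_def \<delta>_def)
    qed
    thus ?thesis by (auto simp: vec_eq_iff axis_def lok)
  qed
  have pd: "\<rho> (x + \<delta> *\<^sub>R axis i 1) = \<rho> x" for x by (simp add: \<delta>_def per)
  define Mv where "Mv y = (\<chi> k. mz (lo q \<sigma>) (hi q \<sigma>) i $ k * y $ k)" for y :: "real^'n"
  have fe: "(\<lambda>y. \<rho> ((lo q \<sigma> - vec t + \<delta> *\<^sub>R axis i 1) + Mv y)) = (\<lambda>y. \<rho> ((lo q \<sigma> - vec t) + Mv y))"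
  proof (rule ext)
    fix y
    have e: "(lo q \<sigma> - vec t + \<delta> *\<^sub>R axis i 1) + Mv y = ((lo q \<sigma> - vec t) + Mv y) + \<delta> *\<^sub>R axis i 1"
      by (simp add: algebra_simps)
    show "\<rho> ((lo q \<sigma> - vec t + \<delta> *\<^sub>R axis i 1) + Mv y) = \<rho> ((lo q \<sigma> - vec t) + Mv y)"
      unfolding e by (rule pd)
  qed
  have "GU \<rho> (lo q ?s) (hi q ?s) t i = GL \<rho> (lo q \<sigma>) (hi q \<sigma>) t i"
    unfolding GU_def GL_def M corner Mv_def[symmetric] fe ..
  thus ?thesis unfolding J_def W by simp
qed

lemma J_zero:
  assumes s: "\<sigma> \<in> Cells q" and P0: "Pm t \<sigma> = 0"
  shows "J t \<sigma> i = 0"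
proof -
  let ?a = "lo q \<sigma> - vec t" and ?b = "hi q \<sigma> - vec t"
  have I0: "(\<rho> has_integral 0) (cbox ?a ?b)"
    using P0 Pm_eq[OF s] integrable_integral[OF integrable_continuous[OF continuous_on_subset[OF cont]]]
    by (metis subset_UNIV)
  have "(1/2) *\<^sub>R (lo q \<sigma> + hi q \<sigma>) - vec t \<in> box ?a ?b"
    using lohi[OF s] by (simp add: mem_box_cart field_simps)
  hence ne: "box ?a ?b \<noteq> {}" by blast
  have z: "\<rho> x = 0" if "x \<in> cbox ?a ?b" for x
    by (rule has_integral_0_cbox_imp_0[OF continuous_on_subset[OF cont] _ I0 ne that]) (auto simp: nn)
  have "GU \<rho> (lo q \<sigma>) (hi q \<sigma>) t i = integral (cbox 0 1) (\<lambda>y::real^'n. 0::real)"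
    unfolding GU_def
  proof (rule Henstock_Kurzweil_Integration.integral_cong)
    fix y :: "real^'n" assume y: "y \<in> cbox 0 1"
    let ?p = "(\<chi> k. if k = i then hi q \<sigma> $ i - t else lo q \<sigma> $ k - t) + (\<chi> k. mz (lo q \<sigma>) (hi q \<sigma>) i $ k * y $ k)"
    have "?p \<in> cbox ?a ?b"
      unfolding mem_box_cart
    proof
      fix k
      have yk: "0 \<le> y$k" "y$k \<le> 1" using y by (auto simp: mem_box_cart)
      have d: "0 < hi q \<sigma> $ k - lo q \<sigma> $ k" using lohi[OF s] by simp
      have "0 \<le> (hi q \<sigma> $ k - lo q \<sigma> $ k) * y$k" "(hi q \<sigma> $ k - lo q \<sigma> $ k) * y$k \<le> hi q \<sigma> $ k - lo q \<sigma> $ k"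
        using yk d by (simp_all add: mult_left_le)
      hence c3: "lo q \<sigma> $ k + (hi q \<sigma> $ k - lo q \<sigma> $ k) * y$k \<le> hi q \<sigma> $ k"
        "0 \<le> (hi q \<sigma> $ k - lo q \<sigma> $ k) * y$k" by linarith+
      thus "?a $ k \<le> ?p $ k \<and> ?p $ k \<le> ?b $ k"
        using lohi[OF s, of k] by (auto simp: mz_def)
    qed
    thus "\<rho> ?p = 0" by (rule z)
  qed
  thus ?thesis by (simp add: J_def)
qed

definition R :: "real \<Rightarrow> ('n \<Rightarrow> nat) \<Rightarrow> 'n \<Rightarrow> real" where
  "R t \<sigma> i = (if Pm t \<sigma> = 0 then 0 else J t \<sigma> i / Pm t \<sigma>)"

lemma R_nonneg: "R t \<sigma> i \<ge> 0"
proof (cases "\<sigma> \<in> Cells q")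
  case True thus ?thesis using J_nonneg[OF True] Pm_nonneg by (simp add: R_def)
next
  case False
  have "A t \<sigma> = {}" using False Tconf_in_Cells[OF q] by (auto simp: A_def)
  thus ?thesis by (simp add: R_def Pm_def)
qed

lemma PR: "\<sigma> \<in> Cells q \<Longrightarrow> Pm t \<sigma> * R t \<sigma> i = J t \<sigma> i"
  using J_zero by (auto simp: R_def)

lemma main_t:
  "((\<lambda>\<epsilon>. (integral\<^sup>L \<mu>N (\<lambda>\<omega>. g (Tconf q (rot (t + \<epsilon>) \<omega>))) - integral\<^sup>L \<mu>N (\<lambda>\<omega>. g (Tconf q (rot t \<omega>)))) / \<epsilon>)
     \<longlongrightarrow> (\<Sum>\<sigma>\<in>Cells q. Pm t \<sigma> * (\<Sum>i\<in>UNIV. R t \<sigma> i * (g (plus1 q \<sigma> i) - g \<sigma>)))) (at_right 0)"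
proof -
  have eqf: "(\<lambda>\<epsilon>. (integral\<^sup>L \<mu>N (\<lambda>\<omega>. g (Tconf q (rot (t + \<epsilon>) \<omega>))) - integral\<^sup>L \<mu>N (\<lambda>\<omega>. g (Tconf q (rot t \<omega>)))) / \<epsilon>)
      = (\<lambda>\<epsilon>. \<Sum>\<sigma>\<in>Cells q. g \<sigma> * ((Pm (t + \<epsilon>) \<sigma> - Pm t \<sigma>) / \<epsilon>))"
    unfolding int_eq by (simp add: fun_eq_iff sum_subtractf[symmetric] sum_divide_distrib right_diff_distrib)
  have lim: "((\<lambda>\<epsilon>. \<Sum>\<sigma>\<in>Cells q. g \<sigma> * ((Pm (t + \<epsilon>) \<sigma> - Pm t \<sigma>) / \<epsilon>))
     \<longlongrightarrow> (\<Sum>\<sigma>\<in>Cells q. g \<sigma> * (\<Sum>i\<in>UNIV. J t (pred q \<sigma> i) i - J t \<sigma> i))) (at_right 0)"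
  proof (rule tendsto_sum, rule tendsto_mult_left)
    fix \<sigma> :: "'n \<Rightarrow> nat" assume s: "\<sigma> \<in> Cells q"
    have "(\<Sum>i\<in>UNIV. Wt (lo q \<sigma>) (hi q \<sigma>) i * (GL \<rho> (lo q \<sigma>) (hi q \<sigma>) t i - GU \<rho> (lo q \<sigma>) (hi q \<sigma>) t i))
        = (\<Sum>i\<in>UNIV. J t (pred q \<sigma> i) i - J t \<sigma> i)"
      by (rule sum.cong[OF refl]) (simp add: right_diff_distrib GL_eq[OF s] J_def)
    thus "((\<lambda>\<epsilon>. (Pm (t + \<epsilon>) \<sigma> - Pm t \<sigma>) / \<epsilon>) \<longlongrightarrow> (\<Sum>i\<in>UNIV. J t (pred q \<sigma> i) i - J t \<sigma> i)) (at_right 0)"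
      using Pm_lim[OF s, of t] by simp
  qed
  have alg: "(\<Sum>\<sigma>\<in>Cells q. Pm t \<sigma> * (\<Sum>i\<in>UNIV. R t \<sigma> i * (g (plus1 q \<sigma> i) - g \<sigma>)))
      = (\<Sum>\<sigma>\<in>Cells q. g \<sigma> * (\<Sum>i\<in>UNIV. J t (pred q \<sigma> i) i - J t \<sigma> i))"
  proof -
    have "(\<Sum>\<sigma>\<in>Cells q. Pm t \<sigma> * (\<Sum>i\<in>UNIV. R t \<sigma> i * (g (plus1 q \<sigma> i) - g \<sigma>)))
        = (\<Sum>\<sigma>\<in>Cells q. \<Sum>i\<in>UNIV. J t \<sigma> i * g (plus1 q \<sigma> i) - J t \<sigma> i * g \<sigma>)"
      by (rule sum.cong[OF refl]) (simp add: sum_distrib_left PR[symmetric] algebra_simps)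
    also have "\<dots> = (\<Sum>i\<in>UNIV. \<Sum>\<sigma>\<in>Cells q. J t \<sigma> i * g (plus1 q \<sigma> i)) - (\<Sum>i\<in>UNIV. \<Sum>\<sigma>\<in>Cells q. J t \<sigma> i * g \<sigma>)"
      by (simp add: sum_subtractf sum.swap[of _ "Cells q"])
    also have "(\<Sum>i\<in>UNIV. \<Sum>\<sigma>\<in>Cells q. J t \<sigma> i * g (plus1 q \<sigma> i)) = (\<Sum>i\<in>UNIV. \<Sum>\<sigma>\<in>Cells q. J t (pred q \<sigma> i) i * g \<sigma>)"
      by (rule sum.cong[OF refl], rule sum_reindex_plus1[OF q])
    also have "(\<Sum>i\<in>UNIV. \<Sum>\<sigma>\<in>Cells q. J t (pred q \<sigma> i) i * g \<sigma>) - (\<Sum>i\<in>UNIV. \<Sum>\<sigma>\<in>Cells q. J t \<sigma> i * g \<sigma>)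
        = (\<Sum>\<sigma>\<in>Cells q. g \<sigma> * (\<Sum>i\<in>UNIV. J t (pred q \<sigma> i) i - J t \<sigma> i))"
      by (simp add: sum_subtractf[symmetric] sum.swap[of _ UNIV] sum_distrib_left algebra_simps)
    finally show ?thesis .
  qed
  show ?thesis unfolding eqf alg by (rule lim)
qed

lemma rot_measurable: "rot t \<in> measurable \<mu>N \<mu>N"
proof -
  have "rot t \<in> measurable lborel lborel"
    using rot_meas_borel by (simp add: measurable_lborel1)
  hence "rot t \<in> measurable torus_leb torus_leb"
    unfolding torus_leb_def by (rule measurable_restrict_space3) (auto simp: rot_in_torus)
  thus ?thesis by (simp add: measurable_cong_sets[OF sets_mu sets_mu])
qed

lemma Pm_shift: "Pm (t + e) \<sigma> = measure (rot_meas t \<mu>N) (A e \<sigma>)"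
proof -
  have "A (t + e) \<sigma> = rot t -` A e \<sigma> \<inter> space \<mu>N"
    by (auto simp: A_def space_mu rot_comp rot_in_torus)
  thus ?thesis unfolding Pm_def rot_meas_def by (simp add: measure_distr[OF rot_measurable A_sets])
qed

lemma invariance: "rot_meas t \<mu>N = rot_meas t' \<mu>N \<Longrightarrow> Pm (t + e) \<sigma> = Pm (t' + e) \<sigma>"
  by (simp add: Pm_shift)


end


theorem proposition1p1:
  fixes q :: nat and \<rho> :: "real^'n \<Rightarrow> real" and \<mu>N :: "(real^'n) measure"
  assumes "q \<ge> 2"
    and "smooth_on_torus \<rho>"
    and "\<forall>\<omega>\<in>torus. \<rho> \<omega> \<ge> 0"
    and "\<mu>N = density torus_leb (\<lambda>\<omega>. ennreal (\<rho> \<omega>))"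
    and "prob_space \<mu>N"
  shows "\<exists>c :: (real^'n) measure \<Rightarrow> ('n \<Rightarrow> nat) \<Rightarrow> 'n \<Rightarrow> real.
           (\<forall>\<mu> \<sigma> i. c \<mu> \<sigma> i \<ge> 0) \<and>
           (\<forall>(t::real) (g :: ('n \<Rightarrow> nat) \<Rightarrow> real).
              ((\<lambda>\<epsilon>. ((\<integral>\<omega>. g (Tconf q (rot (t + \<epsilon>) \<omega>)) \<partial>\<mu>N)
                        - (\<integral>\<omega>. g (Tconf q (rot t \<omega>)) \<partial>\<mu>N)) / \<epsilon>)
               \<longlongrightarrow> (\<integral>\<omega>. Qgen q c (rot_meas t \<mu>N) g (Tconf q (rot t \<omega>)) \<partial>\<mu>N))
              (at_right 0))"
proof -
  have sm: "smooth_fun \<rho>" and perx: "\<And>x i. \<rho> (x + (2*pi) *\<^sub>R axis i 1) = \<rho> x"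
    using assms(2) by (auto simp: smooth_on_torus_def)
  have "has_partials [] \<rho>" using sm unfolding smooth_fun_def by blast
  hence cont: "continuous_on UNIV \<rho>" by simp
  have nn: "0 \<le> \<rho> x" for x by (rule rho_nonneg[OF perx assms(3)])
  interpret Setting q \<rho> \<mu>N
    by (rule Setting.intro[OF assms(1) cont perx nn assms(4) assms(5)])
  define c where "c \<mu> \<sigma> i = (if \<exists>t. \<mu> = rot_meas t \<mu>N then R (SOME t. \<mu> = rot_meas t \<mu>N) \<sigma> i else 0)" for \<mu> \<sigma> i
  show ?thesis
  proof (rule exI[of _ c], intro conjI allI)
    fix \<mu> \<sigma> i show "c \<mu> \<sigma> i \<ge> 0" by (simp add: c_def R_nonneg)
  next
    fix t :: real and g :: "('n \<Rightarrow> nat) \<Rightarrow> real"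
    define s where "s = (SOME s. rot_meas t \<mu>N = rot_meas s \<mu>N)"
    have hs: "rot_meas t \<mu>N = rot_meas s \<mu>N" unfolding s_def by (rule someI[of _ t]) simp
    have cs: "c (rot_meas t \<mu>N) = R s" by (auto simp: c_def s_def fun_eq_iff)
    have Peq: "Pm (t + e) \<sigma> = Pm (s + e) \<sigma>" for e \<sigma> using invariance[OF hs] .
    have Peq0: "Pm t \<sigma> = Pm s \<sigma>" for \<sigma> using invariance[OF hs, of 0 \<sigma>] by simp
    have q1: "(\<lambda>\<epsilon>. ((\<integral>\<omega>. g (Tconf q (rot (t + \<epsilon>) \<omega>)) \<partial>\<mu>N) - (\<integral>\<omega>. g (Tconf q (rot t \<omega>)) \<partial>\<mu>N)) / \<epsilon>)
        = (\<lambda>\<epsilon>. ((\<integral>\<omega>. g (Tconf q (rot (s + \<epsilon>) \<omega>)) \<partial>\<mu>N) - (\<integral>\<omega>. g (Tconf q (rot s \<omega>)) \<partial>\<mu>N)) / \<epsilon>)"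
      unfolding int_eq Peq Peq0 ..
    have rhs: "(\<integral>\<omega>. Qgen q c (rot_meas t \<mu>N) g (Tconf q (rot t \<omega>)) \<partial>\<mu>N)
        = (\<Sum>\<sigma>\<in>Cells q. Pm s \<sigma> * (\<Sum>i\<in>UNIV. R s \<sigma> i * (g (plus1 q \<sigma> i) - g \<sigma>)))"
      unfolding int_eq unfolding Qgen_def cs Peq0 by (simp add: mult.commute)
    show "((\<lambda>\<epsilon>. ((\<integral>\<omega>. g (Tconf q (rot (t + \<epsilon>) \<omega>)) \<partial>\<mu>N) - (\<integral>\<omega>. g (Tconf q (rot t \<omega>)) \<partial>\<mu>N)) / \<epsilon>)
        \<longlongrightarrow> (\<integral>\<omega>. Qgen q c (rot_meas t \<mu>N) g (Tconf q (rot t \<omega>)) \<partial>\<mu>N)) (at_right 0)"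
      unfolding q1 rhs by (rule main_t)
  qed
qed

end
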